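(* In the setting of the context, there is a constant $c$ depending only on $d$, $c_1$, $c_2$ such that for all $H>0$ and $h\in(0,1]$ with $\rho=h/H<1/2$, all $k\in\mathbb{N}_0\times\mathbb{Z}^d$, $i\in\{0,\dots,d\}$ and $s\in\{+,-\}$: (a) $\displaystyle\sum_{F\in\partial\tilde I^{is}_k}S(F\setminus Z^{is}_k)\le c\,\rho H^d$; (b) $\displaystyle\sum_{F\in\partial\tilde I_k\setminus\bigcup_{j=0}^d(\partial\tilde I^{j-}_k\cup\partial\tilde I^{j+}_k)}S(F)\le c\,\rho H^d$.
   Context: Let $d\ge1$, $\mathbb{R}^{d+1}_+=(0,\infty)\times\mathbb{R}^d$ with points $y=(y_0,\dots,y_d)$; $V,S$ denote $(d+1)$- and $d$-dimensional Hausdorff measure. Grid: fix constants $c_1,c_2>0$; $\mathcal C^h$ is a collection of closed subsets (cells) of $\overline{\mathbb{R}^{d+1}_+}$ with Lipschitz boundaries and pairwise disjoint interiors, whose union is $\overline{\mathbb{R}^{d+1}_+}$, with $\operatorname{diam}C\le h$, $V(C)\ge c_1h^{d+1}$, $S(\partial C)\le c_2h^d$ for all cells. Interior faces: ordered pairs $C\to N$ of distinct cells with $S(C\cap N)>0$, identified with the set $C\cap N$. Initial faces: for each cell $C$ meeting $\{0\}\times\mathbb{R}^d$, faces $\partial\to C$ and $C\to\partial$ identified with $C\cap(\{0\}\times\mathbb{R}^d)$. Cubes: for $H>0$ and $k\in\mathbb{N}_0\times\mathbb{Z}^d$, $I_k=H\prod_{i=0}^d[k_i,k_i+1]$; $e^{(i)}$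 is the $i$-th standard basis vector. Fix a partition $\{\tilde I_k\}$ of $\mathcal C^h$ such that every $C\in\tilde I_k$ meets $I_k$. Define $\partial\tilde I_k=\{C\to\partial: C\in\tilde I_k\}\cup\{C\to N\text{ interior face}: C\in\tilde I_k,\ N\notin\tilde I_k\}$. Set $\partial\tilde I^{i\pm}_k=\{C\to N \text{ interior face}: C\in\tilde I_k,\ N\in\tilde I_{k\pm e^{(i)}}\}$ if $k\pm e^{(i)}\in\mathbb{N}_0\times\mathbb{Z}^d$, and otherwise ($i=0$, sign $-$, $k_0=0$) $\partial\tilde I^{0-}_k=\{C\to\partial: C\in\tilde I_k\}$. Half-cylinders: $Z^{i+}_k=\{y\in\overline{\mathbb{R}^{d+1}_+}: y_i>H(k_i+\tfrac12),\ y_j\in(H(k_j+\rho),H(k_j+1-\rho))\ \forall j\ne i\}$ and $Z^{i-}_k$ defined likewise with $y_i<H(k_i+\tfrac12)$. *)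

theory Defs
  imports "HOL-Analysis.Analysis"
begin

text \<open>Points of the closed half space in R^(d+1) are vectors indexed by 'n option:
  coordinate None is y_0, coordinates Some j (j :: 'n, CARD('n) = d) are y_1..y_d.\<close>

definition hausdorff_pre :: "nat \<Rightarrow> real \<Rightarrow> 'a::metric_space set \<Rightarrow> ennreal" where
  "hausdorff_pre s \<delta> A =
     (INF C \<in> {C :: nat \<Rightarrow> 'a set. A \<subseteq> (\<Union>i. C i) \<and> (\<forall>i. bounded (C i) \<and> diameter (C i) \<le> \<delta>)}.
        (\<Sum>i. ennreal (unit_ball_vol (real s) * (diameter (C i) / 2) ^ s)))"

definition hausdorff_measure :: "nat \<Rightarrow> 'a::metric_space set \<Rightarrow> ennreal" where
  "hausdorff_measure s A = (SUP \<delta> \<in> {0<..}. hausdorff_pre s \<delta> A)"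

definition half_space :: "(real^('n::finite option)) set" where
  "half_space = {y. 0 \<le> y $ None}"

definition plane0 :: "(real^('n::finite option)) set" where
  "plane0 = {y. y $ None = 0}"

definition lipschitz_boundary :: "(real^('n::finite option)) set \<Rightarrow> bool" where
  "lipschitz_boundary C \<longleftrightarrow>
     (\<forall>p \<in> frontier C. \<exists>r>0. \<exists>Q L (g :: real^'n \<Rightarrow> real).
        orthogonal_transformation Q \<and> L-lipschitz_on UNIV g \<and>
        (\<forall>x \<in> ball p r. x \<in> C \<longleftrightarrow> g (\<chi> j. Q (x - p) $ Some j) \<le> Q (x - p) $ None))"

definition is_grid :: "real \<Rightarrow> real \<Rightarrow> real \<Rightarrow> (real^('n::finite option)) set set \<Rightarrow> bool" where
  "is_grid c1 c2 h \<C> \<longleftrightarrow>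
     (\<forall>C\<in>\<C>. closed C \<and> bounded C \<and> C \<subseteq> half_space \<and> lipschitz_boundary C \<and>
        diameter C \<le> h \<and> measure lebesgue C \<ge> c1 * h ^ (CARD('n) + 1) \<and>
        hausdorff_measure CARD('n) (frontier C) \<le> ennreal (c2 * h ^ CARD('n))) \<and>
     (\<forall>C\<in>\<C>. \<forall>N\<in>\<C>. C \<noteq> N \<longrightarrow> interior C \<inter> interior N = {}) \<and>
     \<Union>\<C> = half_space"

datatype 'c face = IntF 'c 'c | ToBd 'c | FromBd 'c

definition face_set :: "(real^('n::finite option)) set face \<Rightarrow> (real^('n option)) set" where
  "face_set F = (case F of IntF C N \<Rightarrow> C \<inter> N | ToBd C \<Rightarrow> C \<inter> plane0 | FromBd C \<Rightarrow> C \<inter> plane0)"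

definition interior_face :: "(real^('n::finite option)) set set \<Rightarrow> (real^('n option)) set \<Rightarrow> (real^('n option)) set \<Rightarrow> bool" where
  "interior_face \<C> C N \<longleftrightarrow> C \<in> \<C> \<and> N \<in> \<C> \<and> C \<noteq> N \<and> hausdorff_measure CARD('n) (C \<inter> N) > 0"

definition idx_set :: "('n::finite option \<Rightarrow> int) set" where
  "idx_set = {k. 0 \<le> k None}"

definition cube :: "real \<Rightarrow> ('n::finite option \<Rightarrow> int) \<Rightarrow> (real^('n option)) set" where
  "cube H k = {y. \<forall>i. H * of_int (k i) \<le> y $ i \<and> y $ i \<le> H * (of_int (k i) + 1)}"

text \<open>It k is the block \<tilde>I_k; blocks (for k in idx_set) partition the cells, and
  every cell in \<tilde>I_k meets I_k.\<close>
definition valid_partition :: "real \<Rightarrow> (real^('n::finite option)) set set \<Rightarrow> (('n option \<Rightarrow> int) \<Rightarrow> (real^('n option)) set set) \<Rightarrow> bool" where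
  "valid_partition H \<C> It \<longleftrightarrow>
     (\<forall>k\<in>idx_set. It k \<subseteq> \<C> \<and> (\<forall>C\<in>It k. C \<inter> cube H k \<noteq> {})) \<and>
     (\<forall>C\<in>\<C>. \<exists>!k. k \<in> idx_set \<and> C \<in> It k)"

definition bdry_block :: "(real^('n::finite option)) set set \<Rightarrow> (('n option \<Rightarrow> int) \<Rightarrow> (real^('n option)) set set) \<Rightarrow> ('n option \<Rightarrow> int) \<Rightarrow> (real^('n option)) set face set" where
  "bdry_block \<C> It k =
     {ToBd C | C. C \<in> It k \<and> C \<in> \<C> \<and> C \<inter> plane0 \<noteq> {}} \<union>
     {IntF C N | C N. interior_face \<C> C N \<and> C \<in> It k \<and> N \<notin> It k}"

text \<open>Direction i, sign s (True = +, False = -).\<close>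
definition bdry_dir :: "(real^('n::finite option)) set set \<Rightarrow> (('n option \<Rightarrow> int) \<Rightarrow> (real^('n option)) set set) \<Rightarrow> ('n option \<Rightarrow> int) \<Rightarrow> 'n option \<Rightarrow> bool \<Rightarrow> (real^('n option)) set face set" where
  "bdry_dir \<C> It k i s =
     (let k' = k(i := (if s then k i + 1 else k i - 1)) in
      if k' \<in> idx_set then {IntF C N | C N. interior_face \<C> C N \<and> C \<in> It k \<and> N \<in> It k'}
      else {ToBd C | C. C \<in> It k \<and> C \<in> \<C> \<and> C \<inter> plane0 \<noteq> {}})"

definition halfcyl :: "real \<Rightarrow> real \<Rightarrow> ('n::finite option \<Rightarrow> int) \<Rightarrow> 'n option \<Rightarrow> bool \<Rightarrow> (real^('n option)) set" where
  "halfcyl H \<rho> k i s =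
     {y \<in> half_space.
        (if s then y $ i > H * (of_int (k i) + 1/2) else y $ i < H * (of_int (k i) + 1/2)) \<and>
        (\<forall>j. j \<noteq> i \<longrightarrow> H * (of_int (k j) + \<rho>) < y $ j \<and> y $ j < H * (of_int (k j) + 1 - \<rho>))}"

end

theory Submission
  imports Defs
begin

lemma hpre_mono: "A \<subseteq> B \<Longrightarrow> hausdorff_pre s \<delta> A \<le> hausdorff_pre s \<delta> B"
  unfolding hausdorff_pre_def by (rule INF_superset_mono) auto

lemma haus_mono: "A \<subseteq> B \<Longrightarrow> hausdorff_measure s A \<le> hausdorff_measure s B"
  unfolding hausdorff_measure_def by (rule SUP_mono) (auto intro: hpre_mono)

lemma haus_empty:
  assumes "s > 0" shows "hausdorff_measure s ({}::'a::metric_space set) = 0"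
proof -
  have "hausdorff_pre s \<delta> ({}::'a set) = 0" if "\<delta> > 0" for \<delta>
  proof -
    have "hausdorff_pre s \<delta> ({}::'a set) \<le> (\<Sum>i. ennreal (unit_ball_vol (real s) * (diameter ((\<lambda>_. {}) i :: 'a set) / 2) ^ s))"
      unfolding hausdorff_pre_def using that by (intro INF_lower) auto
    also have "\<dots> = 0" using assms by (simp add: zero_power)
    finally show ?thesis by simp
  qed
  thus ?thesis unfolding hausdorff_measure_def by simp
qed

lemma interleave_suminf:
  fixes a b :: "nat \<Rightarrow> ennreal"
  shows "(\<Sum>n. (if even n then a (n div 2) else b (n div 2))) = (\<Sum>n. a n) + (\<Sum>n. b n)"
proof -
  define f where "f = (\<lambda>n. (if even n then a (n div 2) else b (n div 2)))"
  have "(\<lambda>n. sum f {n*2..<n*2+2}) sums suminf f"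
    by (rule sums_group[OF summable_sums[OF summableI]]) simp
  moreover have "sum f {n*2..<n*2+2} = a n + b n" for n
  proof -
    have "{n*2..<n*2+2} = {2*n, 2*n+1}" by auto
    thus ?thesis by (simp add: f_def)
  qed
  ultimately have "(\<lambda>n. a n + b n) sums suminf f" by simp
  hence "suminf f = (\<Sum>n. a n + b n)" by (simp add: sums_iff)
  also have "\<dots> = (\<Sum>n. a n) + (\<Sum>n. b n)" by (simp add: suminf_add)
  finally show ?thesis unfolding f_def .
qed

lemma hpre_Un:
  "hausdorff_pre s \<delta> (A \<union> B) \<le> hausdorff_pre s \<delta> A + hausdorff_pre s \<delta> B"
proof -
  define W where "W C = (\<Sum>i. ennreal (unit_ball_vol (real s) * (diameter (C i) / 2) ^ s))" for C :: "nat \<Rightarrow> 'a set"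
  define Cov where "Cov X = {C :: nat \<Rightarrow> 'a set. X \<subseteq> (\<Union>i. C i) \<and> (\<forall>i. bounded (C i) \<and> diameter (C i) \<le> \<delta>)}" for X
  have pre: "hausdorff_pre s \<delta> X = (INF C\<in>Cov X. W C)" for X
    unfolding hausdorff_pre_def W_def Cov_def by simp
  have key: "(INF C\<in>Cov (A \<union> B). W C) \<le> W CA + W CB" if CAc: "CA \<in> Cov A" and CBc: "CB \<in> Cov B" for CA CB
  proof -
    define D where "D n = (if even n then CA (n div 2) else CB (n div 2))" for n
    have "D \<in> Cov (A \<union> B)"
    proof -
      have "A \<subseteq> (\<Union>i. D i)"
      proof
        fix x assume "x \<in> A"
        then obtain i where "x \<in> CA i" using CAc unfolding Cov_def by blast
        hence "x \<in> D (2*i)" by (simp add: D_def)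
        thus "x \<in> (\<Union>i. D i)" by blast
      qed
      moreover have "B \<subseteq> (\<Union>i. D i)"
      proof
        fix x assume "x \<in> B"
        then obtain i where "x \<in> CB i" using CBc unfolding Cov_def by blast
        hence "x \<in> D (2*i+1)" by (simp add: D_def)
        thus "x \<in> (\<Union>i. D i)" by blast
      qed
      moreover have "bounded (D i) \<and> diameter (D i) \<le> \<delta>" for i
        using CAc CBc unfolding Cov_def D_def by auto
      ultimately show ?thesis unfolding Cov_def by blast
    qed
    hence "(INF C\<in>Cov (A \<union> B). W C) \<le> W D" by (rule INF_lower)
    also have "W D = W CA + W CB"
    proof -
      have "W D = (\<Sum>n. (if even n then (\<lambda>i. ennreal (unit_ball_vol (real s) * (diameter (CA i) / 2) ^ s)) (n div 2)
            else (\<lambda>i. ennreal (unit_ball_vol (real s) * (diameter (CB i) / 2) ^ s)) (n div 2)))"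
        unfolding W_def D_def by (intro suminf_cong) auto
      also have "\<dots> = W CA + W CB" unfolding W_def by (rule interleave_suminf)
      finally show ?thesis .
    qed
    finally show ?thesis .
  qed
  have "(INF C\<in>Cov (A \<union> B). W C) \<le> (INF C\<in>Cov A. W C) + (INF C\<in>Cov B. W C)"
  proof (rule ennreal_le_epsilon)
    fix e :: real assume e: "0 < e" "(INF C\<in>Cov A. W C) + (INF C\<in>Cov B. W C) < top"
    have fa: "(INF C\<in>Cov A. W C) \<noteq> \<infinity>"
    proof
      assume "(INF C\<in>Cov A. W C) = \<infinity>"
      hence "(INF C\<in>Cov A. W C) + (INF C\<in>Cov B. W C) = top" by simp
      with e(2) show False by simp
    qed
    have fb: "(INF C\<in>Cov B. W C) \<noteq> \<infinity>"
    proof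
      assume "(INF C\<in>Cov B. W C) = \<infinity>"
      hence "(INF C\<in>Cov A. W C) + (INF C\<in>Cov B. W C) = top" by simp
      with e(2) show False by simp
    qed
    obtain CA where CA: "CA \<in> Cov A" "W CA < (INF C\<in>Cov A. W C) + ennreal (e/2)"
      using INF_approx_ennreal[where e="e/2" and A="Cov A" and f=W] fa e(1) by auto
    obtain CB where CB: "CB \<in> Cov B" "W CB < (INF C\<in>Cov B. W C) + ennreal (e/2)"
      using INF_approx_ennreal[where e="e/2" and A="Cov B" and f=W] fb e(1) by auto
    have "(INF C\<in>Cov (A \<union> B). W C) \<le> W CA + W CB" by (rule key[OF CA(1) CB(1)])
    also have "\<dots> \<le> ((INF C\<in>Cov A. W C) + ennreal (e/2)) + ((INF C\<in>Cov B. W C) + ennreal (e/2))"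
      using CA(2) CB(2) by (intro add_mono) auto
    also have "\<dots> = (INF C\<in>Cov A. W C) + (INF C\<in>Cov B. W C) + ennreal e"
      using e(1) by (simp add: ac_simps flip: ennreal_plus)
    finally show "(INF C\<in>Cov (A \<union> B). W C) \<le> (INF C\<in>Cov A. W C) + (INF C\<in>Cov B. W C) + ennreal e" .
  qed
  thus ?thesis unfolding pre .
qed

lemma haus_Un:
  "hausdorff_measure s (A \<union> B) \<le> hausdorff_measure s A + hausdorff_measure s B"
  unfolding hausdorff_measure_def
proof (rule SUP_least)
  fix \<delta> :: real assume "\<delta> \<in> {0<..}"
  have "hausdorff_pre s \<delta> (A \<union> B) \<le> hausdorff_pre s \<delta> A + hausdorff_pre s \<delta> B" by (rule hpre_Un)
  also have "\<dots> \<le> (SUP \<delta>\<in>{0<..}. hausdorff_pre s \<delta> A) + (SUP \<delta>\<in>{0<..}. hausdorff_pre s \<delta> B)"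
    using \<open>\<delta> \<in> {0<..}\<close> by (intro add_mono SUP_upper)
  finally show "hausdorff_pre s \<delta> (A \<union> B) \<le> (SUP \<delta>\<in>{0<..}. hausdorff_pre s \<delta> A) + (SUP \<delta>\<in>{0<..}. hausdorff_pre s \<delta> B)" .
qed

lemma aux_field: "(u::real) > 0 \<Longrightarrow> \<delta> * (v * w / u) * (u * t) = \<delta> * v * (t * w)"
  by (simp add: field_simps)

lemma haus_null:
  fixes A :: "'a::euclidean_space set"
  assumes dim: "DIM('a) = Suc s" and fin: "hausdorff_measure s A \<noteq> \<infinity>" and meas: "A \<in> sets lborel"
  shows "emeasure lborel A = 0"
proof -
  obtain m where m: "hausdorff_measure s A = ennreal m" "m \<ge> 0"
    using fin by (cases "hausdorff_measure s A") auto
  define K where "K = unit_ball_vol (real (Suc s)) * 2 ^ s / unit_ball_vol (real s)"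
  have K0: "K \<ge> 0" unfolding K_def by simp
  have bound: "emeasure lborel A \<le> ennreal (\<delta> * K * (m + 1))" if d: "0 < \<delta>" "\<delta> \<le> 1" for \<delta>
  proof -
    define W where "W C = (\<Sum>i. ennreal (unit_ball_vol (real s) * (diameter (C i) / 2) ^ s))" for C :: "nat \<Rightarrow> 'a set"
    define Cov where "Cov = {C :: nat \<Rightarrow> 'a set. A \<subseteq> (\<Union>i. C i) \<and> (\<forall>i. bounded (C i) \<and> diameter (C i) \<le> \<delta>)}"
    have "(INF C\<in>Cov. W C) = hausdorff_pre s \<delta> A"
      unfolding hausdorff_pre_def W_def Cov_def by simp
    also have "\<dots> \<le> hausdorff_measure s A"
      unfolding hausdorff_measure_def using d by (intro SUP_upper) auto
    also have "\<dots> < ennreal (m + 1)" using m by simp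
    finally obtain C where C: "C \<in> Cov" "W C < ennreal (m + 1)"
      by (auto simp: INF_less_iff)
    define p where "p i = (SOME p. p \<in> C i)" for i
    define r where "r i = diameter (C i)" for i
    have r0: "r i \<ge> 0" for i unfolding r_def by (rule diameter_ge_0) (use C(1) Cov_def in auto)
    have rd: "r i \<le> \<delta>" for i using C(1) unfolding Cov_def r_def by auto
    have sub: "C i \<subseteq> cball (p i) (r i)" for i
    proof
      fix x assume x: "x \<in> C i"
      hence "p i \<in> C i" unfolding p_def by (rule someI)
      with x C(1) show "x \<in> cball (p i) (r i)"
        unfolding Cov_def r_def mem_cball by (auto intro: diameter_bounded_bound)
    qed
    have "A \<subseteq> (\<Union>i. cball (p i) (r i))" using C(1) sub unfolding Cov_def by blast
    hence "emeasure lborel A \<le> emeasure lborel (\<Union>i. cball (p i) (r i))"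
      by (intro emeasure_mono) auto
    also have "\<dots> \<le> (\<Sum>i. emeasure lborel (cball (p i) (r i)))"
      by (rule emeasure_subadditive_countably) auto
    also have "\<dots> = (\<Sum>i. ennreal (unit_ball_vol (real (Suc s)) * r i ^ Suc s))"
    proof (rule suminf_cong)
      fix i
      have "emeasure lborel (cball (p i) (r i)) = ennreal (unit_ball_vol (real DIM('a)) * r i ^ DIM('a))"
        by (rule emeasure_cball[OF r0])
      thus "emeasure lborel (cball (p i) (r i)) = ennreal (unit_ball_vol (real (Suc s)) * r i ^ Suc s)"
        by (simp only: dim)
    qed
    also have "\<dots> \<le> (\<Sum>i. ennreal (\<delta> * K) * ennreal (unit_ball_vol (real s) * (r i / 2) ^ s))"
    proof (rule suminf_le)
      fix i
      have "unit_ball_vol (real (Suc s)) * r i ^ Suc s = unit_ball_vol (real (Suc s)) * r i * r i ^ s" by simp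
      also have "\<dots> \<le> unit_ball_vol (real (Suc s)) * \<delta> * r i ^ s"
        using rd[of i] r0[of i] by (intro mult_right_mono mult_left_mono) auto
      also have "\<dots> = \<delta> * K * (unit_ball_vol (real s) * (r i / 2) ^ s)"
      proof -
        have e2: "(r i / 2) ^ s * 2 ^ s = r i ^ s" by (simp add: power_divide)
        have pos: "unit_ball_vol (real s) > 0" by simp
        have "\<delta> * K * (unit_ball_vol (real s) * (r i / 2) ^ s) = \<delta> * unit_ball_vol (real (Suc s)) * ((r i / 2) ^ s * 2 ^ s)"
          unfolding K_def using aux_field[OF pos] by simp
        hence eq: "\<delta> * K * (unit_ball_vol (real s) * (r i / 2) ^ s) = \<delta> * unit_ball_vol (real (Suc s)) * r i ^ s"
          unfolding e2 .
        show ?thesis by (subst mult.commute[of "unit_ball_vol (real (Suc s))" \<delta>]) (rule eq[symmetric])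
      qed
      finally have "ennreal (unit_ball_vol (real (Suc s)) * r i ^ Suc s) \<le> ennreal (\<delta> * K * (unit_ball_vol (real s) * (r i / 2) ^ s))"
        by (rule ennreal_leI)
      also have "\<dots> = ennreal (\<delta> * K) * ennreal (unit_ball_vol (real s) * (r i / 2) ^ s)"
        using d K0 r0[of i] by (intro ennreal_mult) auto
      finally show "ennreal (unit_ball_vol (real (Suc s)) * r i ^ Suc s) \<le> ennreal (\<delta> * K) * ennreal (unit_ball_vol (real s) * (r i / 2) ^ s)" .
    qed auto
    also have "\<dots> = ennreal (\<delta> * K) * W C" unfolding W_def r_def by simp
    also have "\<dots> \<le> ennreal (\<delta> * K) * ennreal (m + 1)"
      using C(2) by (intro mult_left_mono) auto
    also have "\<dots> = ennreal (\<delta> * K * (m + 1))" using d K0 m by (simp add: ennreal_mult)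
    finally show ?thesis .
  qed
  have eps: "emeasure lborel A \<le> 0 + ennreal e" if e: "e > 0" for e
  proof -
    define \<delta> where "\<delta> = min 1 (e / (K * (m + 1) + 1))"
    have X: "K * (m + 1) \<ge> 0" using K0 m by simp
    have den: "K * (m + 1) + 1 > 0" using X by linarith
    have q: "e / (K * (m + 1) + 1) > 0" using e den by simp
    have d: "0 < \<delta>" "\<delta> \<le> 1" unfolding \<delta>_def using q by auto
    have "\<delta> * (K * (m + 1)) \<le> e / (K * (m + 1) + 1) * (K * (m + 1))"
      unfolding \<delta>_def using X by (intro mult_right_mono) auto
    also have "\<dots> \<le> e / (K * (m + 1) + 1) * (K * (m + 1) + 1)"
      using q by (intro mult_left_mono) auto
    also have "\<dots> = e" using den by simp
    finally have "\<delta> * K * (m + 1) \<le> e" by (simp add: mult.assoc)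
    hence "ennreal (\<delta> * K * (m + 1)) \<le> ennreal e" by (rule ennreal_leI)
    from order_trans[OF bound[OF d] this] show ?thesis by (simp only: add_0)
  qed
  have "emeasure lborel A \<le> 0" by (rule ennreal_le_epsilon) (rule eps)
  thus ?thesis by (simp only: le_zero_eq)
qed

lemma card_opt: "CARD('n::finite option) = Suc CARD('n)"
proof -
  have "(UNIV :: 'n option set) = insert None (Some ` UNIV)" by (auto intro: option.exhaust)
  moreover have "None \<notin> Some ` (UNIV::'n set)" by auto
  ultimately show ?thesis by (simp add: card_image)
qed

lemma grid_cellD:
  fixes \<C> :: "(real^('n::finite option)) set set"
  assumes "is_grid c1 c2 h \<C>" "C \<in> \<C>"
  shows "closed C" "bounded C" "C \<subseteq> half_space" "diameter C \<le> h"
    "measure lebesgue C \<ge> c1 * h ^ (CARD('n) + 1)"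
    "hausdorff_measure CARD('n) (frontier C) \<le> ennreal (c2 * h ^ CARD('n))"
  using assms unfolding is_grid_def by (auto simp del: One_nat_def)

lemma grid_frontier_null:
  fixes \<C> :: "(real^('n::finite option)) set set"
  assumes "is_grid c1 c2 h \<C>" "C \<in> \<C>"
  shows "emeasure lborel (frontier C) = 0"
proof (rule haus_null[where s="CARD('n)"])
  show "DIM(real^('n option)) = Suc CARD('n)" by (simp add: card_opt)
  show "hausdorff_measure CARD('n) (frontier C) \<noteq> \<infinity>"
    using grid_cellD(6)[OF assms] by (auto simp: top_unique)
  show "frontier C \<in> sets lborel" by auto
qed

lemma grid_interior_big:
  fixes \<C> :: "(real^('n::finite option)) set set"
  assumes "is_grid c1 c2 h \<C>" "C \<in> \<C>"
  shows "measure lborel (interior C) \<ge> c1 * h ^ (CARD('n) + 1)"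
proof -
  have cl: "closed C" using grid_cellD(1)[OF assms] .
  have "C = interior C \<union> frontier C" using cl interior_subset[of C]
    unfolding frontier_def by (auto simp: closure_closed)
  moreover have "frontier C \<in> null_sets lborel"
    using grid_frontier_null[OF assms] by (intro null_setsI) auto
  moreover have "interior C \<in> sets lborel" by simp
  ultimately have "measure lborel C = measure lborel (interior C)"
    using measure_Un_null_set by metis
  moreover have "measure lebesgue C = measure lborel C" using cl by simp
  ultimately show ?thesis using grid_cellD(5)[OF assms] by simp
qed

lemma packing:
  fixes \<C> :: "(real^('n::finite option)) set set"
  assumes grid: "is_grid c1 c2 h \<C>" and c1: "c1 > 0" and h: "h > 0" and S: "S \<subseteq> \<C>"
    and R: "\<And>C. C \<in> S \<Longrightarrow> C \<subseteq> cbox a b"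
  shows "finite S \<and> real (card S) * (c1 * h ^ (CARD('n) + 1)) \<le> measure lborel (cbox a b)"
proof -
  define v where "v = c1 * h ^ (CARD('n) + 1)"
  have v: "v > 0" unfolding v_def using c1 h by simp
  have fb: "real (card T) * v \<le> measure lborel (cbox a b)" if T: "finite T" "T \<subseteq> S" for T
  proof -
    have "real (card T) * v = (\<Sum>C\<in>T. v)" by simp
    also have "\<dots> \<le> (\<Sum>C\<in>T. measure lborel (interior C))"
      using T S grid_interior_big[OF grid] unfolding v_def by (intro sum_mono) auto
    also have "\<dots> = measure lborel (\<Union>C\<in>T. interior C)"
    proof (rule measure_finite_Union[symmetric])
      show "finite T" by fact
      show "interior ` T \<subseteq> sets lborel" by auto
      have dj: "\<forall>C\<in>\<C>. \<forall>N\<in>\<C>. C \<noteq> N \<longrightarrow> interior C \<inter> interior N = {}"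
        using grid[unfolded is_grid_def] by (rule conjunct1[OF conjunct2])
      show "disjoint_family_on interior T" unfolding disjoint_family_on_def
      proof (intro ballI impI)
        fix m n assume "m \<in> T" "n \<in> T" "m \<noteq> n"
        moreover have "m \<in> \<C>" "n \<in> \<C>" using \<open>m \<in> T\<close> \<open>n \<in> T\<close> T(2) S by auto
        ultimately show "interior m \<inter> interior n = {}" using dj by blast
      qed
      fix C assume "C \<in> T"
      hence "C \<subseteq> cbox a b" using R T(2) by blast
      hence "interior C \<subseteq> cbox a b" using interior_subset[of C] by (rule order_trans[rotated])
      hence "emeasure lborel (interior C) \<le> emeasure lborel (cbox a b)" by (intro emeasure_mono) auto
      moreover have "emeasure lborel (cbox a b) < \<infinity>" using fmeasurable_cbox[of a b] unfolding fmeasurable_def by simp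
      ultimately have "emeasure lborel (interior C) < \<infinity>" by (rule le_less_trans)
      thus "emeasure lborel (interior C) \<noteq> \<infinity>" by simp
    qed
    also have "\<dots> \<le> measure lborel (cbox a b)"
    proof (rule measure_mono_fmeasurable)
      show "(\<Union>C\<in>T. interior C) \<subseteq> cbox a b"
      proof (rule UN_least)
        fix C assume "C \<in> T"
        hence "C \<subseteq> cbox a b" using R T(2) by blast
        thus "interior C \<subseteq> cbox a b" using interior_subset[of C] by (rule order_trans[rotated])
      qed
      have "open (\<Union>C\<in>T. interior C)" by (intro open_UN) auto
      thus "(\<Union>C\<in>T. interior C) \<in> sets lborel" unfolding sets_lborel by (rule borel_open)
    qed auto
    finally show ?thesis .
  qed
  have "finite S"
  proof (rule ccontr)
    assume "infinite S"
    obtain N :: nat where N: "real N > measure lborel (cbox a b) / v" using reals_Archimedean2 by blast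
    obtain T where T: "T \<subseteq> S" "finite T" "card T = N" using infinite_arbitrarily_large[OF \<open>infinite S\<close>] by blast
    have "real N * v \<le> measure lborel (cbox a b)" using fb[OF T(2,1)] T(3) by simp
    with N v show False by (simp add: field_simps)
  qed
  with fb[of S] show ?thesis unfolding v_def by simp
qed

lemma measure_box:
  fixes lo hi :: "'m::finite \<Rightarrow> real"
  assumes "\<And>l. lo l \<le> hi l"
  shows "measure lborel (cbox (\<chi> l. lo l) (\<chi> l. hi l)) = (\<Prod>l\<in>UNIV. hi l - lo l)"
proof -
  have "cbox (\<chi> l. lo l) (\<chi> l. hi l) \<noteq> {}" using assms by (auto simp: interval_eq_empty_cart not_less)
  thus ?thesis by (simp add: content_cbox_cart)
qed

lemma coord_close:
  fixes \<C> :: "(real^('n::finite option)) set set"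
  assumes grid: "is_grid c1 c2 h \<C>" and C: "C \<in> \<C>" and y: "y \<in> C" and z: "z \<in> C"
  shows "\<bar>y$l - z$l\<bar> \<le> h"
proof -
  have "\<bar>y$l - z$l\<bar> = \<bar>(y - z)$l\<bar>" by simp
  also have "\<dots> \<le> norm (y - z)" by (rule component_le_norm_cart)
  also have "\<dots> = dist y z" by (simp add: dist_norm)
  also have "\<dots> \<le> diameter C" using grid_cellD(2)[OF grid C] y z by (rule diameter_bounded_bound)
  also have "\<dots> \<le> h" using grid_cellD(4)[OF grid C] .
  finally show ?thesis .
qed

lemma cube_mem: "y \<in> cube H k \<longleftrightarrow> (\<forall>l. H * of_int (k l) \<le> y $ l \<and> y $ l \<le> H * (of_int (k l) + 1))"
  unfolding cube_def by simp

lemma plane_frontier: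
  fixes C :: "(real^('n::finite option)) set"
  assumes "closed C" "C \<subseteq> half_space"
  shows "C \<inter> plane0 \<subseteq> frontier C"
proof
  fix x assume x: "x \<in> C \<inter> plane0"
  have "x \<notin> interior C"
  proof
    assume "x \<in> interior C"
    then obtain e where e: "e > 0" "ball x e \<subseteq> C" by (meson open_contains_ball open_interior interior_subset subset_trans)
    define y where "y = x - (e/2) *\<^sub>R axis None 1"
    have "dist x y = e / 2" unfolding y_def dist_norm using e by simp
    hence "y \<in> C" using e by auto
    hence "y $ None \<ge> 0" using assms(2) unfolding half_space_def by auto
    moreover have "y $ None = - e / 2" using x unfolding y_def plane0_def by simp
    ultimately show False using e by simp
  qed
  thus "x \<in> frontier C" using x assms(1) unfolding frontier_def by (auto simp: closure_closed)
qed

lemma inter_frontier: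
  assumes "closed C" "closed N" "interior C \<inter> interior N = {}"
  shows "C \<inter> N \<subseteq> frontier C \<union> frontier N"
  using assms unfolding frontier_def by (auto simp: closure_closed)

definition off :: "bool \<Rightarrow> real" where "off a = (if a then 1 else 0)"

definition near :: "real \<Rightarrow> real \<Rightarrow> ('n::finite option \<Rightarrow> int) \<Rightarrow> real^('n option) \<Rightarrow> 'n option \<Rightarrow> bool \<Rightarrow> bool" where
  "near h H k x l a \<longleftrightarrow> \<bar>x$l - H * (of_int (k l) + off a)\<bar> \<le> h"

lemma near_from_cubes:
  assumes H: "H > 0" and a: "p \<in> cube H k" and b: "q \<in> cube H k'"
    and xa: "\<bar>x$l - p$l\<bar> \<le> h" and xb: "\<bar>x$l - q$l\<bar> \<le> h" and kl: "k' l \<noteq> k l"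
  shows "\<exists>a. near h H k x l a"
proof -
  have pq: "H * of_int (k l) \<le> p$l" "p$l \<le> H * (of_int (k l) + 1)"
    "H * of_int (k' l) \<le> q$l" "q$l \<le> H * (of_int (k' l) + 1)" using a b by (auto simp: cube_mem)
  show ?thesis
  proof (cases "k' l > k l")
    case True
    hence "k' l \<ge> k l + 1" by simp
    hence "real_of_int (k' l) \<ge> of_int (k l) + 1" by linarith
    hence "H * of_int (k' l) \<ge> H * (of_int (k l) + 1)" using H by (intro mult_left_mono) auto
    hence "near h H k x l True" using pq xa xb unfolding near_def off_def abs_le_iff by simp
    thus ?thesis by blast
  next
    case False
    hence "k' l + 1 \<le> k l" using kl by simp
    hence "real_of_int (k' l) + 1 \<le> of_int (k l)" by linarith
    hence "H * (of_int (k' l) + 1) \<le> H * of_int (k l)" using H by (intro mult_left_mono) auto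
    hence "near h H k x l False" using pq xa xb unfolding near_def off_def abs_le_iff by simp
    thus ?thesis by blast
  qed
qed

lemma near_from_outside:
  fixes x :: "real^('n::finite option)"
  assumes H: "H > 0" and a: "p \<in> cube H k" and xa: "\<And>l. \<bar>x$l - p$l\<bar> \<le> h"
    and hs: "x \<in> half_space" and notZ: "x \<notin> halfcyl H (h / H) k i s"
    and side: "if s then x $ i > H * (of_int (k i) + 1/2) else x $ i < H * (of_int (k i) + 1/2)"
  shows "\<exists>j a. j \<noteq> i \<and> near h H k x j a"
proof -
  obtain j where j: "j \<noteq> i" "\<not> (H * (of_int (k j) + h / H) < x $ j \<and> x $ j < H * (of_int (k j) + 1 - h / H))"
    using notZ hs side unfolding halfcyl_def by auto
  have e1: "H * (of_int (k j) + h / H) = H * of_int (k j) + h" using H by (simp add: field_simps)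
  have e2: "H * (of_int (k j) + 1 - h / H) = H * (of_int (k j) + 1) - h" using H by (simp add: field_simps)
  have pj: "H * of_int (k j) \<le> p $ j" "p $ j \<le> H * (of_int (k j) + 1)" using a unfolding cube_mem by auto
  have "near h H k x j False \<or> near h H k x j True"
    using j(2) e1 e2 pj xa[of j] unfolding near_def off_def by auto
  thus ?thesis using j(1) by blast
qed

lemma nb_count:
  fixes \<C> :: "(real^('n::finite option)) set set"
  assumes grid: "is_grid c1 c2 h \<C>" and c1: "c1 > 0" and h: "h > 0" and C: "C \<in> \<C>" and p: "p \<in> C"
  shows "finite {N\<in>\<C>. N \<inter> C \<noteq> {}} \<and> real (card {N\<in>\<C>. N \<inter> C \<noteq> {}}) \<le> 4 ^ (CARD('n) + 1) / c1"
proof -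
  define lo where "lo l = p$l - 2*h" for l
  define hi where "hi l = p$l + 2*h" for l
  have sub: "N \<subseteq> cbox (\<chi> l. lo l) (\<chi> l. hi l)" if "N \<in> {N\<in>\<C>. N \<inter> C \<noteq> {}}" for N
  proof
    fix z assume z: "z \<in> N"
    from that obtain q where q: "q \<in> N" "q \<in> C" "N \<in> \<C>" by auto
    show "z \<in> cbox (\<chi> l. lo l) (\<chi> l. hi l)" unfolding mem_box_cart lo_def hi_def
    proof (simp, intro allI)
      fix l
      have "\<bar>z$l - q$l\<bar> \<le> h" by (rule coord_close[OF grid q(3) z q(1)])
      moreover have "\<bar>q$l - p$l\<bar> \<le> h" by (rule coord_close[OF grid C q(2) p])
      ultimately show "p $ l - 2 * h \<le> z $ l \<and> z $ l \<le> p $ l + 2 * h" by (simp add: abs_le_iff)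
    qed
  qed
  have P: "finite {N\<in>\<C>. N \<inter> C \<noteq> {}} \<and> real (card {N\<in>\<C>. N \<inter> C \<noteq> {}}) * (c1 * h ^ (CARD('n) + 1)) \<le> measure lborel (cbox (\<chi> l. lo l) (\<chi> l. hi l))"
    by (rule packing[OF grid c1 h _ sub]) auto
  have "measure lborel (cbox (\<chi> l. lo l) (\<chi> l. hi l)) = (\<Prod>l\<in>UNIV. hi l - lo l)"
    using h unfolding lo_def hi_def by (intro measure_box) auto
  also have "\<dots> = (4 * h) ^ (CARD('n) + 1)" unfolding lo_def hi_def by (simp add: card_opt)
  finally have "real (card {N\<in>\<C>. N \<inter> C \<noteq> {}}) * (c1 * h ^ (CARD('n) + 1)) \<le> (4 * h) ^ (CARD('n) + 1)"
    using P by (simp only:)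
  hence "real (card {N\<in>\<C>. N \<inter> C \<noteq> {}}) * (c1 * h ^ (CARD('n) + 1)) \<le> 4 ^ (CARD('n) + 1) * h ^ (CARD('n) + 1)"
    by (simp only: power_mult_distrib)
  hence "real (card {N\<in>\<C>. N \<inter> C \<noteq> {}}) * c1 \<le> 4 ^ (CARD('n) + 1)"
    using h by (simp add: mult.assoc[symmetric])
  hence "real (card {N\<in>\<C>. N \<inter> C \<noteq> {}}) \<le> 4 ^ (CARD('n) + 1) / c1"
    using c1 by (simp add: pos_le_divide_eq)
  with P show ?thesis by simp
qed

lemma strip_box_measure:
  fixes w :: "'m::finite \<Rightarrow> real"
  assumes ij: "i \<noteq> j" and wi: "w i = 4 * h" and wj: "w j = 4 * h"
    and wl: "\<And>l. l \<noteq> i \<Longrightarrow> l \<noteq> j \<Longrightarrow> w l = H + 2 * h" and hH: "0 < h" "2 * h < H"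
  shows "(\<Prod>l\<in>UNIV. w l) \<le> 16 * h ^ 2 * (2 * H) ^ (CARD('m) - 2)"
proof -
  have "(\<Prod>l\<in>UNIV. w l) = w i * (\<Prod>l\<in>UNIV - {i}. w l)" by (rule prod.remove) auto
  also have "(\<Prod>l\<in>UNIV - {i}. w l) = w j * (\<Prod>l\<in>UNIV - {i} - {j}. w l)" using ij by (intro prod.remove) auto
  also have "(\<Prod>l\<in>UNIV - {i} - {j}. w l) = (\<Prod>l\<in>UNIV - {i} - {j}. H + 2 * h)" using wl by (intro prod.cong) auto
  also have "\<dots> = (H + 2 * h) ^ card (UNIV - {i} - {j} :: 'm set)" by simp
  also have "card (UNIV - {i} - {j} :: 'm set) = CARD('m) - 2" using ij by (simp add: card_Diff_subset)
  also have "(H + 2 * h) ^ (CARD('m) - 2) \<le> (2 * H) ^ (CARD('m) - 2)" using hH by (intro power_mono) auto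
  hence "w i * (w j * (H + 2 * h) ^ (CARD('m) - 2)) \<le> 4 * h * (4 * h * (2 * H) ^ (CARD('m) - 2))"
    unfolding wi wj using hH by (intro mult_left_mono) auto
  also have "\<dots> = 16 * h ^ 2 * (2 * H) ^ (CARD('m) - 2)" by (simp add: power2_eq_square)
  finally show ?thesis .
qed

lemma bad_count:
  fixes \<C> :: "(real^('n::finite option)) set set"
  assumes grid: "is_grid c1 c2 h \<C>" and c1: "c1 > 0" and h: "h > 0" and hH: "2 * h < H"
  shows "finite {C\<in>\<C>. C \<inter> cube H k \<noteq> {} \<and> (\<exists>x\<in>C. \<exists>i j a b. i \<noteq> j \<and> near h H k x i a \<and> near h H k x j b)} \<and>
    real (card {C\<in>\<C>. C \<inter> cube H k \<noteq> {} \<and> (\<exists>x\<in>C. \<exists>i j a b. i \<noteq> j \<and> near h H k x i a \<and> near h H k x j b)})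
      \<le> real CARD('n option \<times> 'n option \<times> bool \<times> bool) * (16 * 2 ^ (CARD('n) - 1) / c1) * (H ^ (CARD('n) - 1) / h ^ (CARD('n) - 1))"
proof -
  define bad where "bad = {C\<in>\<C>. C \<inter> cube H k \<noteq> {} \<and> (\<exists>x\<in>C. \<exists>i j a b. i \<noteq> j \<and> near h H k x i a \<and> near h H k x j b)}"
  define d where "d = CARD('n)"
  have d1: "d \<ge> 1" unfolding d_def using zero_less_card_finite[where 'a='n] by linarith
  define Bd where "Bd = 16 * 2 ^ (d - 1) / c1 * (H ^ (d - 1) / h ^ (d - 1))"
  have H: "H > 0" using h hH by simp
  define lo where "lo = (\<lambda>(i,j,a,b) l. if l = i then H * (of_int (k i) + off a) - 2*h
                     else if l = j then H * (of_int (k j) + off b) - 2*h else H * of_int (k l) - h)"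
  define hi where "hi = (\<lambda>(i,j,a,b) l. if l = i then H * (of_int (k i) + off a) + 2*h
                     else if l = j then H * (of_int (k j) + off b) + 2*h else H * (of_int (k l) + 1) + h)"
  define T where "T = (\<lambda>(i::'n option,j::'n option,a::bool,b::bool). if i = j then {} else
                   {C\<in>\<C>. C \<subseteq> cbox (\<chi> l. lo (i,j,a,b) l) (\<chi> l. hi (i,j,a,b) l)})"
  have Tb: "finite (T idx) \<and> real (card (T idx)) \<le> Bd" for idx
  proof -
    obtain i j a b where idx: "idx = (i,j,a,b)" by (cases idx) auto
    show ?thesis
    proof (cases "i = j")
      case True thus ?thesis unfolding idx T_def Bd_def using c1 h H by simp
    next
      case False
      have P: "finite (T idx) \<and> real (card (T idx)) * (c1 * h ^ (CARD('n) + 1)) \<le> measure lborel (cbox (\<chi> l. lo (i,j,a,b) l) (\<chi> l. hi (i,j,a,b) l))"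
        unfolding idx T_def using False by (intro packing[OF grid c1 h]) auto
      have "measure lborel (cbox (\<chi> l. lo (i,j,a,b) l) (\<chi> l. hi (i,j,a,b) l)) = (\<Prod>l\<in>UNIV. hi (i,j,a,b) l - lo (i,j,a,b) l)"
        using h H by (intro measure_box) (auto simp: lo_def hi_def algebra_simps)
      also have "\<dots> \<le> 16 * h ^ 2 * (2 * H) ^ (CARD('n option) - 2)"
        using False h hH by (intro strip_box_measure[OF False]) (auto simp: lo_def hi_def algebra_simps)
      also have "CARD('n option) - 2 = d - 1" unfolding d_def by (simp add: card_opt)
      finally have A: "real (card (T idx)) * (c1 * h ^ (d + 1)) \<le> 16 * h ^ 2 * (2 * H) ^ (d - 1)"
        using P unfolding d_def by linarith
      have "h ^ (d + 1) = h ^ 2 * h ^ (d - 1)" using d1 by (simp add: power_add[symmetric])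
      hence "real (card (T idx)) * (c1 * h ^ 2 * h ^ (d - 1)) \<le> 16 * h ^ 2 * (2 ^ (d - 1) * H ^ (d - 1))"
        using A by (simp add: power_mult_distrib mult_ac)
      hence "(real (card (T idx)) * c1 * h ^ (d - 1)) * h ^ 2 \<le> (16 * 2 ^ (d - 1) * H ^ (d - 1)) * h ^ 2"
        by (simp add: mult_ac)
      hence "real (card (T idx)) * c1 * h ^ (d - 1) \<le> 16 * 2 ^ (d - 1) * H ^ (d - 1)"
        using h by (simp del: One_nat_def)
      hence "real (card (T idx)) \<le> 16 * 2 ^ (d - 1) * H ^ (d - 1) / (c1 * h ^ (d - 1))"
        using c1 h by (simp add: pos_le_divide_eq mult.assoc)
      thus ?thesis using P unfolding Bd_def by (simp add: field_simps)
    qed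
  qed
  have sub: "bad \<subseteq> (\<Union>idx. T idx)"
  proof
    fix C assume "C \<in> bad"
    then obtain x i j a b p where C: "C \<in> \<C>" "p \<in> C" "p \<in> cube H k" "x \<in> C" "i \<noteq> j" "near h H k x i a" "near h H k x j b"
      unfolding bad_def by blast
    have "C \<subseteq> cbox (\<chi> l. lo (i,j,a,b) l) (\<chi> l. hi (i,j,a,b) l)"
    proof
      fix y assume y: "y \<in> C"
      show "y \<in> cbox (\<chi> l. lo (i,j,a,b) l) (\<chi> l. hi (i,j,a,b) l)" unfolding mem_box_cart
      proof (intro allI)
        fix l
        have yx: "\<bar>y$l - x$l\<bar> \<le> h" by (rule coord_close[OF grid C(1) y C(4)])
        have yp: "\<bar>y$l - p$l\<bar> \<le> h" by (rule coord_close[OF grid C(1) y C(2)])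
        have pc: "H * of_int (k l) \<le> p$l" "p$l \<le> H * (of_int (k l) + 1)" using C(3) by (auto simp: cube_mem)
        show "(\<chi> l. lo (i,j,a,b) l) $ l \<le> y $ l \<and> y $ l \<le> (\<chi> l. hi (i,j,a,b) l) $ l"
          using yx yp pc C(6,7) unfolding lo_def hi_def near_def by (auto simp: abs_le_iff)
      qed
    qed
    hence "C \<in> T (i,j,a,b)" using C(1,5) unfolding T_def by simp
    thus "C \<in> (\<Union>idx. T idx)" by blast
  qed
  have finU: "finite (\<Union>idx. T idx)" using Tb by auto
  have "real (card bad) \<le> real (card (\<Union>idx. T idx))" using sub finU by (simp add: card_mono)
  also have "\<dots> \<le> real (\<Sum>idx\<in>UNIV. card (T idx))" 
  proof -
    have "card (\<Union>idx. T idx) \<le> (\<Sum>idx\<in>UNIV. card (T idx))" by (rule card_UN_le) simp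
    thus ?thesis by (simp only: of_nat_le_iff)
  qed
  also have "\<dots> = (\<Sum>idx\<in>UNIV. real (card (T idx)))" by (rule of_nat_sum)
  also have "\<dots> \<le> (\<Sum>idx\<in>(UNIV::('n option \<times> 'n option \<times> bool \<times> bool) set). Bd)" using Tb by (intro sum_mono) auto
  also have "\<dots> = real CARD('n option \<times> 'n option \<times> bool \<times> bool) * Bd" by simp
  finally have "real (card bad) \<le> real CARD('n option \<times> 'n option \<times> bool \<times> bool) * Bd" .
  moreover have "finite bad" using finU sub by (rule finite_subset[rotated])
  ultimately show ?thesis unfolding bad_def Bd_def d_def by (simp only: mult.assoc)
qed

lemma infsum_bound:
  fixes f :: "'a \<Rightarrow> ennreal"
  assumes G: "finite G" and z: "\<And>F. F \<in> A \<Longrightarrow> F \<notin> G \<Longrightarrow> f F = 0"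
    and b: "\<And>F. F \<in> A \<Longrightarrow> f F \<le> ennreal M" and M: "M \<ge> 0"
  shows "infsum f A \<le> ennreal (real (card G) * M)"
proof -
  have "infsum f A = infsum f (A \<inter> G)"
    by (rule infsum_cong_neutral) (use z in auto)
  also have "\<dots> = sum f (A \<inter> G)" using G by simp
  also have "\<dots> \<le> (\<Sum>F\<in>A \<inter> G. ennreal M)" using b by (intro sum_mono) auto
  also have "\<dots> = ennreal (real (card (A \<inter> G)) * M)" using M by (simp add: ennreal_mult ennreal_of_nat_eq_real_of_nat)
  also have "\<dots> \<le> ennreal (real (card G) * M)"
    using G M by (intro ennreal_leI mult_right_mono) (auto intro: card_mono)
  finally show ?thesis .
qed

definition isbad :: "(real^('n::finite option)) set set \<Rightarrow> real \<Rightarrow> real \<Rightarrow> ('n option \<Rightarrow> int) \<Rightarrow> (real^('n option)) set \<Rightarrow> bool" where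
  "isbad \<C> h H k C \<longleftrightarrow> C \<in> \<C> \<and> C \<inter> cube H k \<noteq> {} \<and> (\<exists>x\<in>C. \<exists>i j a b. i \<noteq> j \<and> near h H k x i a \<and> near h H k x j b)"

context
  fixes c1 c2 H h :: real and \<C> :: "(real^('n::finite option)) set set" and It :: "('n option \<Rightarrow> int) \<Rightarrow> (real^('n option)) set set" and k :: "'n option \<Rightarrow> int"
  assumes c1: "c1 > 0" and c2: "c2 > 0" and H: "H > 0" and h: "0 < h" and hH: "2 * h < H"
    and grid: "is_grid c1 c2 h \<C>" and vp: "valid_partition H \<C> It" and kI: "k \<in> idx_set"
begin

lemma face_le:
  assumes "(\<exists>C N. F = IntF C N \<and> interior_face \<C> C N) \<or> (\<exists>C. F = ToBd C \<and> C \<in> \<C>)"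
  shows "hausdorff_measure CARD('n) (face_set F) \<le> ennreal (2 * c2 * h ^ CARD('n))"
  using assms
proof
  assume "\<exists>C N. F = IntF C N \<and> interior_face \<C> C N"
  then obtain C N where F: "F = IntF C N" and CN: "C \<in> \<C>" "N \<in> \<C>" "C \<noteq> N"
    unfolding interior_face_def by blast
  have "face_set F \<subseteq> frontier C \<union> frontier N" unfolding F face_set_def
    using inter_frontier[of C N] grid_cellD(1)[OF grid CN(1)] grid_cellD(1)[OF grid CN(2)] grid CN
    unfolding is_grid_def by auto
  hence "hausdorff_measure CARD('n) (face_set F) \<le> hausdorff_measure CARD('n) (frontier C \<union> frontier N)"
    by (rule haus_mono)
  also have "\<dots> \<le> hausdorff_measure CARD('n) (frontier C) + hausdorff_measure CARD('n) (frontier N)" by (rule haus_Un)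
  also have "\<dots> \<le> ennreal (c2 * h ^ CARD('n)) + ennreal (c2 * h ^ CARD('n))"
    by (intro add_mono grid_cellD(6)[OF grid] CN)
  also have "\<dots> = ennreal (2 * c2 * h ^ CARD('n))" using c2 h by (simp flip: ennreal_plus)
  finally show ?thesis .
next
  assume "\<exists>C. F = ToBd C \<and> C \<in> \<C>"
  then obtain C where F: "F = ToBd C" and C: "C \<in> \<C>" by blast
  have "face_set F \<subseteq> frontier C" unfolding F face_set_def
    using plane_frontier grid_cellD(1,3)[OF grid C] by auto
  hence "hausdorff_measure CARD('n) (face_set F) \<le> hausdorff_measure CARD('n) (frontier C)"
    by (rule haus_mono)
  also have "\<dots> \<le> ennreal (c2 * h ^ CARD('n))" by (rule grid_cellD(6)[OF grid C])
  also have "\<dots> \<le> ennreal (2 * c2 * h ^ CARD('n))" using c2 h by (intro ennreal_leI) auto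
  finally show ?thesis .
qed

lemma cell_meets:
  assumes "C \<in> It k'" "k' \<in> idx_set"
  shows "C \<in> \<C>" "\<exists>p. p \<in> C \<and> p \<in> cube H k'"
  using assms vp unfolding valid_partition_def by blast+

end

context
  fixes c1 c2 H h :: real and \<C> :: "(real^('n::finite option)) set set" and It :: "('n option \<Rightarrow> int) \<Rightarrow> (real^('n option)) set set" and k :: "'n option \<Rightarrow> int"
  assumes c1: "c1 > 0" and c2: "c2 > 0" and H: "H > 0" and h: "0 < h" and hH: "2 * h < H"
    and grid: "is_grid c1 c2 h \<C>" and vp: "valid_partition H \<C> It" and kI: "k \<in> idx_set"
begin

lemma cell_meets':
  assumes "C \<in> It k'" "k' \<in> idx_set"
  shows "C \<in> \<C>" "\<exists>p. p \<in> C \<and> p \<in> cube H k'"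
  using assms vp unfolding valid_partition_def by blast+

lemma memA:
  assumes F: "F \<in> bdry_dir \<C> It k i s"
    and nz: "hausdorff_measure CARD('n) (face_set F - halfcyl H (h / H) k i s) \<noteq> 0"
  shows "(\<exists>C N. F = IntF C N \<and> isbad \<C> h H k C \<and> N \<in> \<C> \<and> N \<inter> C \<noteq> {}) \<or> (\<exists>C. F = ToBd C \<and> isbad \<C> h H k C)"
proof -
  define k' where "k' = k(i := (if s then k i + 1 else k i - 1))"
  have "face_set F - halfcyl H (h / H) k i s \<noteq> {}"
  proof
    assume e: "face_set F - halfcyl H (h / H) k i s = {}"
    have "hausdorff_measure CARD('n) ({}::(real^('n option)) set) \<noteq> 0" using nz unfolding e .
    thus False using haus_empty[of "CARD('n)", where 'a="real^('n option)"] by simp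
  qed
  then obtain x where x: "x \<in> face_set F" "x \<notin> halfcyl H (h / H) k i s" by blast
  show ?thesis
  proof (cases "k' \<in> idx_set")
    case True
    then obtain C N where FCN: "F = IntF C N" "interior_face \<C> C N" "C \<in> It k" "N \<in> It k'"
      using F unfolding bdry_dir_def Let_def k'_def[symmetric] by auto
    have xCN: "x \<in> C" "x \<in> N" using x(1) unfolding FCN(1) face_set_def by auto
    have C: "C \<in> \<C>" and N: "N \<in> \<C>" using FCN(2) unfolding interior_face_def by auto
    obtain p where p: "p \<in> C" "p \<in> cube H k" using cell_meets'(2)[OF FCN(3) kI] by blast
    obtain q where q: "q \<in> N" "q \<in> cube H k'" using cell_meets'(2)[OF FCN(4) True] by blast
    have xp: "\<bar>x$l - p$l\<bar> \<le> h" for l by (rule coord_close[OF grid C xCN(1) p(1)])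
    have xq: "\<bar>x$l - q$l\<bar> \<le> h" for l by (rule coord_close[OF grid N xCN(2) q(1)])
    have ki: "k' i \<noteq> k i" unfolding k'_def by simp
    obtain a where ai: "near h H k x i a" using near_from_cubes[OF H p(2) q(2) xp xq ki] by blast
    have qi: "H * of_int (k' i) \<le> q$i" "q$i \<le> H * (of_int (k' i) + 1)" using q(2) by (auto simp: cube_mem)
    have side: "if s then x $ i > H * (of_int (k i) + 1/2) else x $ i < H * (of_int (k i) + 1/2)"
    proof (cases s)
      case True
      hence "H * of_int (k' i) = H * of_int (k i) + H" unfolding k'_def by (simp add: algebra_simps)
      thus ?thesis using True qi xq[of i] hH by (auto simp: abs_le_iff algebra_simps)
    next
      case False
      hence "H * (of_int (k' i) + 1) = H * of_int (k i)" unfolding k'_def by (simp add: algebra_simps)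
      thus ?thesis using False qi xq[of i] hH by (auto simp: abs_le_iff algebra_simps)
    qed
    have hs: "x \<in> half_space" using grid_cellD(3)[OF grid C] xCN(1) by auto
    obtain j b where jb: "j \<noteq> i" "near h H k x j b"
      using near_from_outside[OF H p(2) xp hs x(2) side] by blast
    have "isbad \<C> h H k C" unfolding isbad_def using C p xCN(1) ai jb by blast
    moreover have "N \<inter> C \<noteq> {}" using xCN by auto
    ultimately show ?thesis using FCN(1) N by blast
  next
    case False
    have k0: "k None \<ge> 0" using kI unfolding idx_set_def by simp
    have iN: "i = None" and ns: "\<not> s" and kN: "k None = 0"
      using False k0 unfolding k'_def idx_set_def by (auto split: if_splits)
    then obtain C where FC: "F = ToBd C" "C \<in> It k" "C \<in> \<C>"
      using F False unfolding bdry_dir_def Let_def k'_def[symmetric] by auto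
    have xC: "x \<in> C" "x $ None = 0" using x(1) unfolding FC(1) face_set_def plane0_def by auto
    obtain p where p: "p \<in> C" "p \<in> cube H k" using cell_meets'(2)[OF FC(2) kI] by blast
    have xp: "\<bar>x$l - p$l\<bar> \<le> h" for l by (rule coord_close[OF grid FC(3) xC(1) p(1)])
    have ai: "near h H k x None False" unfolding near_def off_def using xC(2) kN h by simp
    have side: "if s then x $ i > H * (of_int (k i) + 1/2) else x $ i < H * (of_int (k i) + 1/2)"
      using ns iN xC(2) kN H by simp
    have hs: "x \<in> half_space" using grid_cellD(3)[OF grid FC(3)] xC(1) by auto
    obtain j b where jb: "j \<noteq> i" "near h H k x j b"
      using near_from_outside[OF H p(2) xp hs x(2) side] by blast
    have "isbad \<C> h H k C" unfolding isbad_def using FC(3) p xC(1) ai jb iN by blast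
    thus ?thesis using FC(1) by blast
  qed
qed

end

context
  fixes c1 c2 H h :: real and \<C> :: "(real^('n::finite option)) set set" and It :: "('n option \<Rightarrow> int) \<Rightarrow> (real^('n option)) set set" and k :: "'n option \<Rightarrow> int"
  assumes c1: "c1 > 0" and c2: "c2 > 0" and H: "H > 0" and h: "0 < h" and hH: "2 * h < H"
    and grid: "is_grid c1 c2 h \<C>" and vp: "valid_partition H \<C> It" and kI: "k \<in> idx_set"
begin

lemma cell_meets'':
  assumes "C \<in> It k'" "k' \<in> idx_set"
  shows "C \<in> \<C>" "\<exists>p. p \<in> C \<and> p \<in> cube H k'"
  using assms vp unfolding valid_partition_def by blast+

lemma memB:
  assumes F: "F \<in> bdry_block \<C> It k - (\<Union>j. bdry_dir \<C> It k j False \<union> bdry_dir \<C> It k j True)"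
    and nz: "hausdorff_measure CARD('n) (face_set F) \<noteq> 0"
  shows "\<exists>C N. F = IntF C N \<and> isbad \<C> h H k C \<and> N \<in> \<C> \<and> N \<inter> C \<noteq> {}"
proof -
  have notdir: "F \<notin> bdry_dir \<C> It k j s" for j s using F by (cases s) auto
  have "face_set F \<noteq> {}"
    using nz haus_empty[of "CARD('n)", where 'a="real^('n option)"] by auto
  then obtain x where x: "x \<in> face_set F" by blast
  have k0: "k None \<ge> 0" using kI unfolding idx_set_def by simp
  have "F \<in> bdry_block \<C> It k" using F by blast
  then consider (T) C where "F = ToBd C" "C \<in> It k" "C \<in> \<C>" "C \<inter> plane0 \<noteq> {}"
    | (I) C N where "F = IntF C N" "interior_face \<C> C N" "C \<in> It k" "N \<notin> It k"
    unfolding bdry_block_def by blast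
  thus ?thesis
  proof cases
    case T
    show ?thesis
    proof (cases "k None = 0")
      case True
      have "F \<in> bdry_dir \<C> It k None False"
        using T True unfolding bdry_dir_def Let_def idx_set_def by auto
      with notdir show ?thesis by blast
    next
      case False
      obtain p where p: "p \<in> C" "p \<in> cube H k" using cell_meets''(2)[OF T(2) kI] by blast
      obtain y where y: "y \<in> C" "y $ None = 0" using T(4) unfolding plane0_def by auto
      have "\<bar>y$None - p$None\<bar> \<le> h" by (rule coord_close[OF grid T(3) y(1) p(1)])
      moreover have "H * of_int (k None) \<le> p $ None" using p(2) by (auto simp: cube_mem)
      moreover have "H * 1 \<le> H * of_int (k None)" using False k0 H by (intro mult_left_mono) auto
      ultimately show ?thesis using y(2) hH h by (auto simp: abs_le_iff)
    qed
  next
    case I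
    have xCN: "x \<in> C" "x \<in> N" using x unfolding I(1) face_set_def by auto
    have C: "C \<in> \<C>" and N: "N \<in> \<C>" using I(2) unfolding interior_face_def by auto
    obtain k'' where k'': "k'' \<in> idx_set" "N \<in> It k''" using vp N unfolding valid_partition_def by blast
    have kne: "k'' \<noteq> k" using k'' I(4) by auto
    obtain p where p: "p \<in> C" "p \<in> cube H k" using cell_meets''(2)[OF I(3) kI] by blast
    obtain q where q: "q \<in> N" "q \<in> cube H k''" using cell_meets''(2)[OF k''(2) k''(1)] by blast
    have xp: "\<bar>x$l - p$l\<bar> \<le> h" for l by (rule coord_close[OF grid C xCN(1) p(1)])
    have xq: "\<bar>x$l - q$l\<bar> \<le> h" for l by (rule coord_close[OF grid N xCN(2) q(1)])
    show ?thesis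
    proof (cases "\<exists>i j. i \<noteq> j \<and> k'' i \<noteq> k i \<and> k'' j \<noteq> k j")
      case True
      then obtain i j where ij: "i \<noteq> j" "k'' i \<noteq> k i" "k'' j \<noteq> k j" by blast
      obtain a where a: "near h H k x i a" using near_from_cubes[OF H p(2) q(2) xp xq ij(2)] by blast
      obtain b where b: "near h H k x j b" using near_from_cubes[OF H p(2) q(2) xp xq ij(3)] by blast
      have "isbad \<C> h H k C" unfolding isbad_def using C p xCN(1) a b ij(1) by blast
      moreover have "N \<inter> C \<noteq> {}" using xCN by auto
      ultimately show ?thesis using I(1) N by blast
    next
      case False
      obtain i where i: "k'' i \<noteq> k i" using kne by blast
      have oth: "k'' l = k l" if "l \<noteq> i" for l using False i that by blast
      have pi: "H * of_int (k i) \<le> p$i" "p$i \<le> H * (of_int (k i) + 1)" using p(2) by (auto simp: cube_mem)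
      have qi: "H * of_int (k'' i) \<le> q$i" "q$i \<le> H * (of_int (k'' i) + 1)" using q(2) by (auto simp: cube_mem)
      have pq: "\<bar>p$i - q$i\<bar> \<le> 2 * h" using xp[of i] xq[of i] by (auto simp: abs_le_iff)
      have "k'' i = k i + 1 \<or> k'' i = k i - 1"
      proof (rule ccontr)
        assume "\<not> ?thesis"
        hence "k'' i \<ge> k i + 2 \<or> k'' i \<le> k i - 2" using i by auto
        thus False
        proof
          assume "k'' i \<ge> k i + 2"
          hence "real_of_int (k'' i) \<ge> of_int (k i) + 2" by linarith
          hence "H * of_int (k'' i) \<ge> H * (of_int (k i) + 2)" using H by (intro mult_left_mono) auto
          thus False using pi qi pq hH by (auto simp: abs_le_iff algebra_simps)
        next
          assume "k'' i \<le> k i - 2"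
          hence "real_of_int (k'' i) + 2 \<le> of_int (k i)" by linarith
          hence "H * (of_int (k'' i) + 2) \<le> H * of_int (k i)" using H by (intro mult_left_mono) auto
          thus False using pi qi pq hH by (auto simp: abs_le_iff algebra_simps)
        qed
      qed
      then obtain s where s: "k'' = k(i := (if s then k i + 1 else k i - 1))"
      proof
        assume "k'' i = k i + 1"
        hence "k'' = k(i := (if True then k i + 1 else k i - 1))" using oth by auto
        thus ?thesis by (rule that)
      next
        assume "k'' i = k i - 1"
        hence "k'' = k(i := (if False then k i + 1 else k i - 1))" using oth by auto
        thus ?thesis by (rule that)
      qed
      have "F \<in> bdry_dir \<C> It k i s"
        unfolding bdry_dir_def Let_def s[symmetric] using k'' I by auto
      with notdir show ?thesis by blast
    qed
  qed
qed

end

theorem mainTheorem3: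
  fixes c1 c2 :: real
  assumes "c1 > 0" and "c2 > 0"
  shows "\<exists>c::real. \<forall>H h (\<C> :: (real^('n::finite option)) set set) It k.
     H > 0 \<longrightarrow> 0 < h \<longrightarrow> h \<le> 1 \<longrightarrow> h / H < 1/2 \<longrightarrow>
     is_grid c1 c2 h \<C> \<longrightarrow> valid_partition H \<C> It \<longrightarrow> k \<in> idx_set \<longrightarrow>
     (\<forall>i s. (\<Sum>\<^sub>\<infinity>F\<in>bdry_dir \<C> It k i s.
                hausdorff_measure CARD('n) (face_set F - halfcyl H (h / H) k i s))
             \<le> ennreal (c * (h / H) * H ^ CARD('n))) \<and>
     (\<Sum>\<^sub>\<infinity>F\<in>bdry_block \<C> It k - (\<Union>j. bdry_dir \<C> It k j False \<union> bdry_dir \<C> It k j True).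
         hausdorff_measure CARD('n) (face_set F))
       \<le> ennreal (c * (h / H) * H ^ CARD('n))"
proof -
  note c1 = assms(1) and c2 = assms(2)
  define d where "d = CARD('n)"
  have d1: "d \<ge> 1" unfolding d_def using zero_less_card_finite[where 'a='n] by linarith
  define NI where "NI = real CARD('n option \<times> 'n option \<times> bool \<times> bool)"
  define B0 where "B0 = 16 * 2 ^ (d - 1) / c1"
  define K2 where "K2 = 4 ^ (d + 1) / c1"
  define c where "c = NI * B0 * (K2 + 1) * (2 * c2)"
  have NI0: "NI \<ge> 0" and B00: "B0 \<ge> 0" and K20: "K2 \<ge> 0"
    unfolding NI_def B0_def K2_def using c1 by auto
  show ?thesis
  proof (intro exI[of _ c] allI impI)
    fix H h and \<C> :: "(real^('n::finite option)) set set" and It :: "('n option \<Rightarrow> int) \<Rightarrow> (real^('n option)) set set" and k :: "'n option \<Rightarrow> int"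
    assume H: "H > 0" and h: "0 < h" and h1: "h \<le> 1" and hH': "h / H < 1/2"
      and grid: "is_grid c1 c2 h \<C>" and vp: "valid_partition H \<C> It" and kI: "k \<in> idx_set"
    have hH: "2 * h < H" using hH' H by (simp add: field_simps)
    define bad where "bad = {C. isbad \<C> h H k C}"
    have badc: "finite bad \<and> real (card bad) \<le> NI * B0 * (H ^ (d - 1) / h ^ (d - 1))"
      using bad_count[OF grid c1 h hH, of k] unfolding bad_def isbad_def NI_def B0_def d_def
      by (simp add: Collect_conj_eq[symmetric])
    define Nb where "Nb C = {N\<in>\<C>. N \<inter> C \<noteq> {}}" for C
    have nb: "finite (Nb C) \<and> real (card (Nb C)) \<le> K2" if "C \<in> bad" for C
    proof -
      from that obtain p where "C \<in> \<C>" "p \<in> C" unfolding bad_def isbad_def by blast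
      from nb_count[OF grid c1 h this] show ?thesis unfolding Nb_def K2_def d_def .
    qed
    define G where "G = (\<lambda>(C,N). IntF C N) ` (SIGMA C:bad. Nb C) \<union> ToBd ` bad"
    have finS: "finite (SIGMA C:bad. Nb C)" using badc nb by auto
    have finG: "finite G" unfolding G_def using finS badc by auto
    have "card G \<le> card ((\<lambda>(C,N). IntF C N) ` (SIGMA C:bad. Nb C)) + card (ToBd ` bad)"
      unfolding G_def by (rule card_Un_le)
    also have "\<dots> \<le> card (SIGMA C:bad. Nb C) + card bad"
      by (intro add_mono card_image_le finS) (use badc in auto)
    finally have "real (card G) \<le> real (card (SIGMA C:bad. Nb C)) + real (card bad)" by linarith
    also have "real (card (SIGMA C:bad. Nb C)) = (\<Sum>C\<in>bad. real (card (Nb C)))"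
      using badc nb by (simp add: card_SigmaI)
    also have "\<dots> \<le> (\<Sum>C\<in>bad. K2)" using nb by (intro sum_mono) auto
    also have "\<dots> = real (card bad) * K2" by simp
    finally have cardG: "real (card G) \<le> real (card bad) * (K2 + 1)" by (simp add: algebra_simps)
    define M where "M = 2 * c2 * h ^ CARD('n)"
    have M0: "M \<ge> 0" unfolding M_def using c2 h by simp
    have "real (card G) * M \<le> real (card bad) * (K2 + 1) * M"
      using cardG M0 by (rule mult_right_mono)
    also have "\<dots> \<le> NI * B0 * (H ^ (d - 1) / h ^ (d - 1)) * (K2 + 1) * M"
      using badc K20 M0 by (intro mult_right_mono) auto
    also have "\<dots> = c * (h / H) * H ^ CARD('n)"
    proof -
      have "h ^ d = h * h ^ (d - 1)" "H ^ d = H * H ^ (d - 1)" using d1 by (simp_all add: power_eq_if)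
      thus ?thesis unfolding c_def M_def d_def[symmetric] using h H by (simp add: field_simps)
    qed
    finally have fin: "real (card G) * M \<le> c * (h / H) * H ^ CARD('n)" .
    have partA: "(\<Sum>\<^sub>\<infinity>F\<in>bdry_dir \<C> It k i s.
                hausdorff_measure CARD('n) (face_set F - halfcyl H (h / H) k i s))
             \<le> ennreal (c * (h / H) * H ^ CARD('n))" for i s
    proof -
      have "(\<Sum>\<^sub>\<infinity>F\<in>bdry_dir \<C> It k i s.
                hausdorff_measure CARD('n) (face_set F - halfcyl H (h / H) k i s)) \<le> ennreal (real (card G) * M)"
      proof (rule infsum_bound[OF finG _ _ M0])
        fix F assume F: "F \<in> bdry_dir \<C> It k i s"
        show "hausdorff_measure CARD('n) (face_set F - halfcyl H (h / H) k i s) = 0" if "F \<notin> G"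
        proof (rule ccontr)
          assume "hausdorff_measure CARD('n) (face_set F - halfcyl H (h / H) k i s) \<noteq> 0"
          from memA[OF c1 c2 H h hH grid vp kI F this] have "F \<in> G"
            unfolding G_def bad_def Nb_def by auto
          with that show False by simp
        qed
        have "(\<exists>C N. F = IntF C N \<and> interior_face \<C> C N) \<or> (\<exists>C. F = ToBd C \<and> C \<in> \<C>)"
          using F unfolding bdry_dir_def Let_def by (auto split: if_splits)
        from face_le[OF c1 c2 H h hH grid vp kI this]
        have "hausdorff_measure CARD('n) (face_set F) \<le> ennreal M" unfolding M_def .
        thus "hausdorff_measure CARD('n) (face_set F - halfcyl H (h / H) k i s) \<le> ennreal M"
          by (meson Diff_subset haus_mono order_trans)
      qed
      also have "\<dots> \<le> ennreal (c * (h / H) * H ^ CARD('n))" using fin by (rule ennreal_leI)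
      finally show ?thesis .
    qed
    have partB: "(\<Sum>\<^sub>\<infinity>F\<in>bdry_block \<C> It k - (\<Union>j. bdry_dir \<C> It k j False \<union> bdry_dir \<C> It k j True).
         hausdorff_measure CARD('n) (face_set F)) \<le> ennreal (c * (h / H) * H ^ CARD('n))"
    proof -
      have "(\<Sum>\<^sub>\<infinity>F\<in>bdry_block \<C> It k - (\<Union>j. bdry_dir \<C> It k j False \<union> bdry_dir \<C> It k j True).
         hausdorff_measure CARD('n) (face_set F)) \<le> ennreal (real (card G) * M)"
      proof (rule infsum_bound[OF finG _ _ M0])
        fix F assume F: "F \<in> bdry_block \<C> It k - (\<Union>j. bdry_dir \<C> It k j False \<union> bdry_dir \<C> It k j True)"
        show "hausdorff_measure CARD('n) (face_set F) = 0" if "F \<notin> G"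
        proof (rule ccontr)
          assume "hausdorff_measure CARD('n) (face_set F) \<noteq> 0"
          from memB[OF c1 c2 H h hH grid vp kI F this] have "F \<in> G"
            unfolding G_def bad_def Nb_def by auto
          with that show False by simp
        qed
        have "(\<exists>C N. F = IntF C N \<and> interior_face \<C> C N) \<or> (\<exists>C. F = ToBd C \<and> C \<in> \<C>)"
          using F unfolding bdry_block_def by auto
        from face_le[OF c1 c2 H h hH grid vp kI this]
        show "hausdorff_measure CARD('n) (face_set F) \<le> ennreal M" unfolding M_def .
      qed
      also have "\<dots> \<le> ennreal (c * (h / H) * H ^ CARD('n))" using fin by (rule ennreal_leI)
      finally show ?thesis .
    qed
    show "(\<forall>i s. (\<Sum>\<^sub>\<infinity>F\<in>bdry_dir \<C> It k i s.
                hausdorff_measure CARD('n) (face_set F - halfcyl H (h / H) k i s))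
             \<le> ennreal (c * (h / H) * H ^ CARD('n))) \<and>
     (\<Sum>\<^sub>\<infinity>F\<in>bdry_block \<C> It k - (\<Union>j. bdry_dir \<C> It k j False \<union> bdry_dir \<C> It k j True).
         hausdorff_measure CARD('n) (face_set F))
       \<le> ennreal (c * (h / H) * H ^ CARD('n))" using partA partB by blast
  qed
qed

end
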